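(* Let $c$ be the ellipse $x^2/a_c^2+y^2/b_c^2=1$, $a_c>b_c>0$, with numerical eccentricity $m=\sqrt{a_c^2-b_c^2}/a_c$, and let $\mathrm{sn},\mathrm{cn},\mathrm{dn}$ be the Jacobian elliptic functions and $K$ the complete elliptic integral of the first kind with modulus $m$. Then the mapping \[\mathbf Y:\ U\times V\to\mathbb R^2,\quad (\tilde u,\tilde v)\mapsto\left(-a_c\frac{\mathrm{sn}\,\tilde u\ \mathrm{dn}\,\tilde v}{\mathrm{cn}\,\tilde v},\ b_c\frac{\mathrm{cn}\,\tilde u}{\mathrm{cn}\,\tilde v}\right),\quad U=\{\tilde u: 0\le\tilde u<4K\},\ V=\{\tilde v: 0\le\tilde v<K\},\] is injective and parametrizes the exterior of $c$ in such a way that the curves $\tilde u=\text{const}$ are branches of hyperbolas confocal with $c$, the curves $\tilde v=\text{const}$ are ellipses confocal with $c$, and the curves $\tilde u\pm\tilde v=\text{const}$ are tangent lines of $c$.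
   Context: Confocal conics of $c$: $\frac{x^2}{a_c^2+k}+\frac{y^2}{b_c^2+k}=1$, $k\in\mathbb R\setminus\{-a_c^2,-b_c^2\}$. Modulus convention: $\mathrm{sn}\,\tilde u=\sin\varphi$, $\mathrm{cn}\,\tilde u=\cos\varphi$ where $\tilde u=\int_0^\varphi(1-m^2\sin^2\psi)^{-1/2}d\psi$, $\mathrm{dn}=\sqrt{1-m^2\mathrm{sn}^2}$, $K=\int_0^{\pi/2}(1-m^2\sin^2\psi)^{-1/2}d\psi$. *)

theory Defs
  imports "HOL-Analysis.Analysis"
begin

definition ell_F :: "real \<Rightarrow> real \<Rightarrow> real" where
  "ell_F m \<phi> =
     (if 0 \<le> \<phi> then integral {0..\<phi>} (\<lambda>\<psi>. 1 / sqrt (1 - m\<^sup>2 * (sin \<psi>)\<^sup>2))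
      else - integral {\<phi>..0} (\<lambda>\<psi>. 1 / sqrt (1 - m\<^sup>2 * (sin \<psi>)\<^sup>2)))"

definition jam :: "real \<Rightarrow> real \<Rightarrow> real" where
  "jam m u = (THE \<phi>. ell_F m \<phi> = u)"

definition jsn :: "real \<Rightarrow> real \<Rightarrow> real" where "jsn m u = sin (jam m u)"
definition jcn :: "real \<Rightarrow> real \<Rightarrow> real" where "jcn m u = cos (jam m u)"
definition jdn :: "real \<Rightarrow> real \<Rightarrow> real" where "jdn m u = sqrt (1 - m\<^sup>2 * (jsn m u)\<^sup>2)"

definition ellK :: "real \<Rightarrow> real" where "ellK m = ell_F m (pi / 2)"

definition ecc :: "real \<Rightarrow> real \<Rightarrow> real" where "ecc a b = sqrt (a\<^sup>2 - b\<^sup>2) / a"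

definition ellipse_c :: "real \<Rightarrow> real \<Rightarrow> (real \<times> real) set" where
  "ellipse_c a b = {(x, y). x\<^sup>2 / a\<^sup>2 + y\<^sup>2 / b\<^sup>2 = 1}"

definition confocal :: "real \<Rightarrow> real \<Rightarrow> real \<Rightarrow> (real \<times> real) set" where
  "confocal a b k = {(x, y). x\<^sup>2 / (a\<^sup>2 + k) + y\<^sup>2 / (b\<^sup>2 + k) = 1}"

definition tangent_line :: "real \<Rightarrow> real \<Rightarrow> real \<times> real \<Rightarrow> (real \<times> real) set" where
  "tangent_line a b p0 = {(x, y). x * fst p0 / a\<^sup>2 + y * snd p0 / b\<^sup>2 = 1}"

definition Ymap :: "real \<Rightarrow> real \<Rightarrow> real \<Rightarrow> real \<Rightarrow> real \<times> real" where
  "Ymap a b u v =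
     (let m = ecc a b in
      (- a * jsn m u * jdn m v / jcn m v, b * jcn m u / jcn m v))"

end

theory Submission
  imports Defs
begin

definition fI :: "real \<Rightarrow> real \<Rightarrow> real" where
  "fI m \<psi> = 1 / sqrt (1 - m\<^sup>2 * (sin \<psi>)\<^sup>2)"

lemma rad_pos: fixes m x :: real assumes "m\<^sup>2 < 1" shows "1 - m\<^sup>2 * (sin x)\<^sup>2 > 0"
proof -
  have "(sin x)\<^sup>2 \<le> 1" using sin_cos_squared_add[of x] zero_le_power2[of "cos x"] by linarith
  hence "m\<^sup>2 * (sin x)\<^sup>2 \<le> m\<^sup>2" by (simp add: mult_left_le)
  thus ?thesis using assms by linarith
qed

lemma rad_le1: fixes m x :: real shows "1 - m\<^sup>2 * (sin x)\<^sup>2 \<le> 1"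
proof -
  have "0 \<le> m\<^sup>2 * (sin x)\<^sup>2" by simp
  thus ?thesis by linarith
qed

lemma fI_ge1: assumes "m\<^sup>2 < 1" shows "fI m x \<ge> 1"
proof -
  have p: "sqrt (1 - m\<^sup>2 * (sin x)\<^sup>2) > 0" using rad_pos[OF assms] by simp
  have "sqrt (1 - m\<^sup>2 * (sin x)\<^sup>2) \<le> 1" by simp
  thus ?thesis using p unfolding fI_def by simp
qed

lemma fI_cont: assumes "m\<^sup>2 < 1" shows "continuous_on S (fI m)"
proof -
  have "\<And>x. 1 - m\<^sup>2 * (sin x)\<^sup>2 \<noteq> 0" using rad_pos[OF assms] by (metis less_irrefl)
  thus ?thesis unfolding fI_def by (intro continuous_intros) auto
qed

lemma fI_int: assumes "m\<^sup>2 < 1" shows "fI m integrable_on {c..d}"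
  by (rule integrable_continuous_real[OF fI_cont[OF assms]])

lemma ell_F_eq: assumes "m\<^sup>2 < 1" "c \<le> 0" "c \<le> \<phi>"
  shows "ell_F m \<phi> = integral {c..\<phi>} (fI m) - integral {c..0} (fI m)"
proof (cases "0 \<le> \<phi>")
  case True
  have "integral {c..0} (fI m) + integral {0..\<phi>} (fI m) = integral {c..\<phi>} (fI m)"
    using Henstock_Kurzweil_Integration.integral_combine[where a=c and c=0 and b=\<phi> and f="fI m"] assms True fI_int by auto
  thus ?thesis using True unfolding ell_F_def fI_def by simp
next
  case False
  have "integral {c..\<phi>} (fI m) + integral {\<phi>..0} (fI m) = integral {c..0} (fI m)"
    using Henstock_Kurzweil_Integration.integral_combine[where a=c and c=\<phi> and b=0 and f="fI m"] assms False fI_int by auto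
  thus ?thesis using False unfolding ell_F_def fI_def by simp
qed

lemma ell_F_deriv: assumes "m\<^sup>2 < 1"
  shows "(ell_F m has_real_derivative fI m x) (at x)"
proof -
  define c where "c = - \<bar>x\<bar> - 1"
  have c: "c \<le> 0" "c < x" unfolding c_def by auto
  have "((\<lambda>y. integral {c..y} (fI m)) has_real_derivative fI m x) (at x within {c..x+1})"
    by (rule integral_has_real_derivative) (use fI_cont[OF assms] c in auto)
  moreover have "x \<in> interior {c..x+1}" using c interior_atLeastAtMost_real[of c "x+1"] by simp
  ultimately have "((\<lambda>y. integral {c..y} (fI m)) has_real_derivative fI m x) (at x)"
    using at_within_interior by metis
  from DERIV_diff[OF this DERIV_const[of "integral {c..0} (fI m)" "at x"]]
  have d: "((\<lambda>y. integral {c..y} (fI m) - integral {c..0} (fI m)) has_real_derivative fI m x) (at x)"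
    by simp
  show ?thesis
  proof (rule has_field_derivative_transform_within_open[OF d, of "{c<..}"])
    show "open {c<..}" by simp
    show "x \<in> {c<..}" using c by simp
    fix y assume "y \<in> {c<..}"
    thus "integral {c..y} (fI m) - integral {c..0} (fI m) = ell_F m y"
      using ell_F_eq[OF assms c(1), of y] by simp
  qed
qed

lemma ell_F_0: "ell_F m 0 = 0" unfolding ell_F_def by simp

lemma ell_F_cont: assumes "m\<^sup>2 < 1" shows "isCont (ell_F m) x"
  using ell_F_deriv[OF assms] DERIV_isCont by blast

lemma ell_F_strict: assumes "m\<^sup>2 < 1" "x < y" shows "ell_F m x < ell_F m y"
  by (rule DERIV_pos_imp_increasing[OF assms(2)])
     (metis ell_F_deriv[OF assms(1)] fI_ge1[OF assms(1)] less_le_trans zero_less_one)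

lemma ell_F_ge: assumes "m\<^sup>2 < 1" "0 \<le> x" shows "x \<le> ell_F m x"
proof -
  have "(\<lambda>z. ell_F m z - z) 0 \<le> (\<lambda>z. ell_F m z - z) x"
  proof (rule DERIV_nonneg_imp_nondecreasing[OF assms(2)])
    fix z
    have "((\<lambda>z. ell_F m z - z) has_real_derivative fI m z - 1) (at z)"
      using DERIV_diff[OF ell_F_deriv[OF assms(1)] DERIV_ident] by simp
    moreover have "fI m z - 1 \<ge> 0" using fI_ge1[OF assms(1)] by simp
    ultimately show "\<exists>y. ((\<lambda>z. ell_F m z - z) has_real_derivative y) (at z) \<and> 0 \<le> y" by blast
  qed
  thus ?thesis by (simp add: ell_F_0)
qed

lemma ell_F_le: assumes "m\<^sup>2 < 1" "x \<le> 0" shows "ell_F m x \<le> x"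
proof -
  have "(\<lambda>z. ell_F m z - z) x \<le> (\<lambda>z. ell_F m z - z) 0"
  proof (rule DERIV_nonneg_imp_nondecreasing[OF assms(2)])
    fix z
    have "((\<lambda>z. ell_F m z - z) has_real_derivative fI m z - 1) (at z)"
      using DERIV_diff[OF ell_F_deriv[OF assms(1)] DERIV_ident] by simp
    moreover have "fI m z - 1 \<ge> 0" using fI_ge1[OF assms(1)] by simp
    ultimately show "\<exists>y. ((\<lambda>z. ell_F m z - z) has_real_derivative y) (at z) \<and> 0 \<le> y" by blast
  qed
  thus ?thesis by (simp add: ell_F_0)
qed

lemma ell_F_surj: assumes "m\<^sup>2 < 1" shows "\<exists>\<phi>. ell_F m \<phi> = u"
proof (cases "0 \<le> u")
  case True
  show ?thesis using IVT[of "ell_F m" 0 u u] ell_F_ge[OF assms True] True ell_F_cont[OF assms]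
    by (auto simp: ell_F_0)
next
  case False
  show ?thesis using IVT[of "ell_F m" u u 0] ell_F_le[OF assms] False ell_F_cont[OF assms]
    by (auto simp: ell_F_0)
qed

lemma ell_F_inj: assumes "m\<^sup>2 < 1" "ell_F m x = ell_F m y" shows "x = y"
  using ell_F_strict[OF assms(1), of x y] ell_F_strict[OF assms(1), of y x] assms(2)
  by (cases x y rule: linorder_cases) auto

lemma ell_F_less_iff: assumes "m\<^sup>2 < 1" shows "ell_F m x < ell_F m y \<longleftrightarrow> x < y"
  using ell_F_strict[OF assms, of x y] ell_F_strict[OF assms, of y x]
  by (cases x y rule: linorder_cases) auto

lemma ell_F_le_iff: assumes "m\<^sup>2 < 1" shows "ell_F m x \<le> ell_F m y \<longleftrightarrow> x \<le> y"
  using ell_F_less_iff[OF assms, of y x] by linarith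

lemma jam_F: assumes "m\<^sup>2 < 1" shows "ell_F m (jam m u) = u"
proof -
  obtain p where p: "ell_F m p = u" using ell_F_surj[OF assms] by blast
  have "ell_F m (THE \<phi>. ell_F m \<phi> = u) = u"
    by (rule theI[of _ p]) (use p ell_F_inj[OF assms] in auto)
  thus ?thesis unfolding jam_def .
qed

lemma F_jam: assumes "m\<^sup>2 < 1" shows "jam m (ell_F m x) = x"
  using jam_F[OF assms, of "ell_F m x"] ell_F_inj[OF assms] by blast

lemma jam_less_iff: assumes "m\<^sup>2 < 1" shows "jam m u < jam m v \<longleftrightarrow> u < v"
  using ell_F_less_iff[OF assms, of "jam m u" "jam m v"] jam_F[OF assms] by simp

lemma jam_le_iff: assumes "m\<^sup>2 < 1" shows "jam m u \<le> jam m v \<longleftrightarrow> u \<le> v"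
  using ell_F_le_iff[OF assms, of "jam m u" "jam m v"] jam_F[OF assms] by simp

lemma jam_eq_iff: assumes "m\<^sup>2 < 1" shows "jam m u = jam m v \<longleftrightarrow> u = v"
  using jam_le_iff[OF assms, of u v] jam_le_iff[OF assms, of v u] by linarith

lemma jam_0: assumes "m\<^sup>2 < 1" shows "jam m 0 = 0"
  using F_jam[OF assms, of 0] by (simp add: ell_F_0)

lemma fI_shift: "fI m (x + pi) = fI m x" unfolding fI_def by simp
lemma fI_refl: "fI m (pi - x) = fI m x" unfolding fI_def by simp

lemma ell_F_shift: assumes "m\<^sup>2 < 1" shows "ell_F m (x + pi) = ell_F m x + ell_F m pi"
proof -
  have "\<forall>z. ((\<lambda>z. ell_F m (z + pi) - ell_F m z) has_real_derivative 0) (at z)"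
  proof (rule allI)
    fix z
    have "((\<lambda>z. ell_F m (z + pi)) has_real_derivative fI m (z + pi)) (at z)"
      using ell_F_deriv[OF assms, of "z + pi"] DERIV_shift by blast
    from DERIV_diff[OF this ell_F_deriv[OF assms, of z]]
    show "((\<lambda>z. ell_F m (z + pi) - ell_F m z) has_real_derivative 0) (at z)"
      by (simp add: fI_shift)
  qed
  from DERIV_isconst_all[OF this, of x 0] show ?thesis by (simp add: ell_F_0)
qed

lemma ell_F_refl: assumes "m\<^sup>2 < 1" shows "ell_F m x + ell_F m (pi - x) = ell_F m pi"
proof -
  have "\<forall>z. ((\<lambda>z. ell_F m z + ell_F m (pi - z)) has_real_derivative 0) (at z)"
  proof (rule allI)
    fix z
    have "((\<lambda>z. pi - z) has_real_derivative -1) (at z)"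
      using DERIV_diff[OF DERIV_const DERIV_ident] by simp
    from DERIV_chain2[OF ell_F_deriv[OF assms] this]
    have "((\<lambda>z. ell_F m (pi - z)) has_real_derivative - fI m z) (at z)"
      by (simp add: fI_refl)
    from DERIV_add[OF ell_F_deriv[OF assms, of z] this]
    show "((\<lambda>z. ell_F m z + ell_F m (pi - z)) has_real_derivative 0) (at z)"
      by simp
  qed
  from DERIV_isconst_all[OF this, of x 0] show ?thesis by (simp add: ell_F_0)
qed

lemma ell_F_pi: assumes "m\<^sup>2 < 1" shows "ell_F m pi = 2 * ellK m"
  using ell_F_refl[OF assms, of "pi/2"] unfolding ellK_def by simp

lemma ell_F_2pi: assumes "m\<^sup>2 < 1" shows "ell_F m (2*pi) = 4 * ellK m"
  using ell_F_shift[OF assms, of pi] ell_F_pi[OF assms] by simp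

lemma ellK_pos: assumes "m\<^sup>2 < 1" shows "ellK m > 0"
  using ell_F_strict[OF assms, of 0 "pi/2"] unfolding ellK_def by (simp add: ell_F_0)

lemma jam_shift: assumes "m\<^sup>2 < 1" shows "jam m (u + 2 * ellK m) = jam m u + pi"
proof -
  have "ell_F m (jam m u + pi) = u + 2 * ellK m"
    using ell_F_shift[OF assms] ell_F_pi[OF assms] jam_F[OF assms] by simp
  thus ?thesis using F_jam[OF assms] by metis
qed

lemma jam_K: assumes "m\<^sup>2 < 1" shows "jam m (ellK m) = pi/2"
  unfolding ellK_def using F_jam[OF assms] .

lemma jam_4K: assumes "m\<^sup>2 < 1" shows "jam m (4 * ellK m) = 2*pi"
  using F_jam[OF assms, of "2*pi"] ell_F_2pi[OF assms] by simp


locale ellm =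
  fixes m :: real
  assumes m1: "m\<^sup>2 < 1"
begin

lemma jam_cont: "isCont (jam m) u"
proof -
  have "isCont (jam m) (ell_F m (jam m u))"
    by (rule isCont_inverse_function[where d=1]) (use F_jam[OF m1] ell_F_cont[OF m1] in auto)
  thus ?thesis using jam_F[OF m1] by simp
qed

lemma dn_pos: "jdn m u > 0"
  unfolding jdn_def jsn_def using rad_pos[OF m1] by simp

lemma dn_sq: "(jdn m u)\<^sup>2 = 1 - m\<^sup>2 * (jsn m u)\<^sup>2"
  unfolding jdn_def jsn_def using rad_pos[OF m1, of "jam m u"] by simp

lemma sn_cn: "(jsn m u)\<^sup>2 + (jcn m u)\<^sup>2 = 1"
  unfolding jsn_def jcn_def by simp

lemma jam_deriv: "(jam m has_real_derivative jdn m u) (at u)"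
proof -
  have "(jam m has_real_derivative inverse (fI m (jam m u))) (at u)"
    by (rule DERIV_inverse_function[where a="u - 1" and b="u + 1"])
       (use ell_F_deriv[OF m1] fI_ge1[OF m1, of "jam m u"] jam_F[OF m1] jam_cont in auto)
  thus ?thesis unfolding fI_def jdn_def jsn_def by simp
qed

lemma sn_deriv: "(jsn m has_real_derivative jcn m u * jdn m u) (at u)"
  unfolding jsn_def[abs_def] jcn_def
  using DERIV_chain2[OF DERIV_sin jam_deriv] .

lemma cn_deriv: "(jcn m has_real_derivative - jsn m u * jdn m u) (at u)"
  unfolding jsn_def jcn_def[abs_def]
  using DERIV_chain2[OF DERIV_cos jam_deriv] by simp

lemma dn_deriv: "(jdn m has_real_derivative - m\<^sup>2 * jsn m u * jcn m u) (at u)"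
proof -
  have r: "1 - m\<^sup>2 * (jsn m u)\<^sup>2 > 0" unfolding jsn_def using rad_pos[OF m1] by simp
  have "((\<lambda>u. 1 - m\<^sup>2 * (jsn m u)\<^sup>2) has_real_derivative - (m\<^sup>2 * (2 * jsn m u * (jcn m u * jdn m u)))) (at u)"
    by (rule DERIV_cong[OF DERIV_diff[OF DERIV_const DERIV_cmult[OF DERIV_power[OF sn_deriv, where n=2]]]])
       (simp add: algebra_simps)
  from DERIV_chain2[OF DERIV_real_sqrt[OF r] this]
  have "(jdn m has_real_derivative inverse (sqrt (1 - m\<^sup>2 * (jsn m u)\<^sup>2)) / 2 * - (m\<^sup>2 * (2 * jsn m u * (jcn m u * jdn m u)))) (at u)"
    unfolding jdn_def[abs_def] .
  moreover have "inverse (sqrt (1 - m\<^sup>2 * (jsn m u)\<^sup>2)) / 2 * - (m\<^sup>2 * (2 * jsn m u * (jcn m u * jdn m u)))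
     = - m\<^sup>2 * jsn m u * jcn m u"
  proof -
    have e: "sqrt (1 - m\<^sup>2 * (jsn m u)\<^sup>2) = jdn m u" by (simp add: jdn_def)
    show ?thesis using dn_pos[of u] unfolding e by (simp add: field_simps)
  qed
  ultimately show ?thesis using DERIV_cong by metis
qed

lemma sn_chain: "(f has_real_derivative f') (at x) \<Longrightarrow>
   ((\<lambda>x. jsn m (f x)) has_real_derivative jcn m (f x) * jdn m (f x) * f') (at x)"
  using DERIV_chain2[OF sn_deriv] by blast
lemma cn_chain: "(f has_real_derivative f') (at x) \<Longrightarrow>
   ((\<lambda>x. jcn m (f x)) has_real_derivative - jsn m (f x) * jdn m (f x) * f') (at x)"
  using DERIV_chain2[OF cn_deriv] by blast
lemma dn_chain: "(f has_real_derivative f') (at x) \<Longrightarrow>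
   ((\<lambda>x. jdn m (f x)) has_real_derivative - m\<^sup>2 * jsn m (f x) * jcn m (f x) * f') (at x)"
  using DERIV_chain2[OF dn_deriv] by blast


lemma sn_0: "jsn m 0 = 0" unfolding jsn_def using jam_0[OF m1] by simp
lemma cn_0: "jcn m 0 = 1" unfolding jcn_def using jam_0[OF m1] by simp
lemma dn_0: "jdn m 0 = 1" unfolding jdn_def using sn_0 by simp

lemma den_pos: "1 - m\<^sup>2 * (jsn m p)\<^sup>2 * (jsn m q)\<^sup>2 > 0"
proof -
  have "(jsn m q)\<^sup>2 \<le> 1" using sn_cn[of q] zero_le_power2[of "jcn m q"] by linarith
  hence "m\<^sup>2 * (jsn m p)\<^sup>2 * (jsn m q)\<^sup>2 \<le> m\<^sup>2 * (jsn m p)\<^sup>2"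
    by (simp add: mult_left_le)
  moreover have "1 - m\<^sup>2 * (jsn m p)\<^sup>2 > 0" using rad_pos[OF m1] unfolding jsn_def by simp
  ultimately show ?thesis by linarith
qed

lemma add_sn: "jsn m (p + q) = (jsn m p * jcn m q * jdn m q + jsn m q * jcn m p * jdn m p) / (1 - m\<^sup>2 * (jsn m p)\<^sup>2 * (jsn m q)\<^sup>2)"
proof -
  define w where "w = p + q"
  define A where "A = (\<lambda>p. (jsn m p * jcn m (w - p) * jdn m (w - p) + jsn m (w - p) * jcn m p * jdn m p) / (1 - m\<^sup>2 * (jsn m p)\<^sup>2 * (jsn m (w - p))\<^sup>2))"
  have "\<forall>x. (A has_real_derivative 0) (at x)"
  proof
    fix x
    have dq: "((\<lambda>x. w - x) has_real_derivative -1) (at x)"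
      using DERIV_diff[OF DERIV_const DERIV_ident] by simp
    have r: "(jsn m x)\<^sup>2 + (jcn m x)\<^sup>2 = 1" "(jsn m (w-x))\<^sup>2 + (jcn m (w-x))\<^sup>2 = 1"
      "(jdn m x)\<^sup>2 = 1 - m\<^sup>2 * (jsn m x)\<^sup>2" "(jdn m (w-x))\<^sup>2 = 1 - m\<^sup>2 * (jsn m (w-x))\<^sup>2"
      using sn_cn dn_sq by auto
    have nz: "1 - m\<^sup>2 * (jsn m x)\<^sup>2 * (jsn m (w - x))\<^sup>2 \<noteq> 0" using den_pos[of x "w-x"] by simp
    note dN = DERIV_add[OF DERIV_mult[OF DERIV_mult[OF sn_deriv cn_chain[OF dq]] dn_chain[OF dq]]
            DERIV_mult[OF DERIV_mult[OF sn_chain[OF dq] cn_deriv] dn_deriv]]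
    note dD = DERIV_diff[OF DERIV_const DERIV_mult[OF DERIV_cmult[OF DERIV_power[OF sn_deriv, where n=2]] DERIV_power[OF sn_chain[OF dq], where n=2]]]
    show "(A has_real_derivative 0) (at x)"
      unfolding A_def
      apply (rule DERIV_cong[OF DERIV_divide[OF dN dD nz]])
      apply (simp only: divide_eq_0_iff)
      apply (rule disjI1)
      apply simp
      using r by algebra
  qed
  from DERIV_isconst_all[OF this, of p 0]
  show ?thesis unfolding A_def w_def by (simp add: sn_0 cn_0 dn_0)
qed


lemma add_cn: "jcn m (p + q) = (jcn m p * jcn m q - jsn m p * jsn m q * jdn m p * jdn m q) / (1 - m\<^sup>2 * (jsn m p)\<^sup>2 * (jsn m q)\<^sup>2)"
proof -
  define w where "w = p + q"
  define A where "A = (\<lambda>p. (jcn m p * jcn m (w - p) - jsn m p * jsn m (w - p) * jdn m p * jdn m (w - p)) / (1 - m\<^sup>2 * (jsn m p)\<^sup>2 * (jsn m (w - p))\<^sup>2))"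
  have "\<forall>x. (A has_real_derivative 0) (at x)"
  proof
    fix x
    have dq: "((\<lambda>x. w - x) has_real_derivative -1) (at x)"
      using DERIV_diff[OF DERIV_const DERIV_ident] by simp
    have r: "(jsn m x)\<^sup>2 + (jcn m x)\<^sup>2 = 1" "(jsn m (w-x))\<^sup>2 + (jcn m (w-x))\<^sup>2 = 1"
      "(jdn m x)\<^sup>2 = 1 - m\<^sup>2 * (jsn m x)\<^sup>2" "(jdn m (w-x))\<^sup>2 = 1 - m\<^sup>2 * (jsn m (w-x))\<^sup>2"
      using sn_cn dn_sq by auto
    have nz: "1 - m\<^sup>2 * (jsn m x)\<^sup>2 * (jsn m (w - x))\<^sup>2 \<noteq> 0" using den_pos[of x "w-x"] by simp
    note dN = DERIV_diff[OF DERIV_mult[OF cn_deriv cn_chain[OF dq]]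
       DERIV_mult[OF DERIV_mult[OF DERIV_mult[OF sn_deriv sn_chain[OF dq]] dn_deriv] dn_chain[OF dq]]]
    note dD = DERIV_diff[OF DERIV_const DERIV_mult[OF DERIV_cmult[OF DERIV_power[OF sn_deriv, where n=2]] DERIV_power[OF sn_chain[OF dq], where n=2]]]
    show "(A has_real_derivative 0) (at x)"
      unfolding A_def
      apply (rule DERIV_cong[OF DERIV_divide[OF dN dD nz]])
      apply (simp only: divide_eq_0_iff)
      apply (rule disjI1)
      apply simp
      using r by algebra
  qed
  from DERIV_isconst_all[OF this, of p 0]
  show ?thesis unfolding A_def w_def by (simp add: sn_0 cn_0 dn_0)
qed

lemma tangent_ident: "jcn m q = jsn m p * jdn m q * jsn m (p + q) + jcn m p * jcn m (p + q)"
proof -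
  have r: "(jsn m p)\<^sup>2 + (jcn m p)\<^sup>2 = 1" "(jsn m q)\<^sup>2 + (jcn m q)\<^sup>2 = 1"
      "(jdn m p)\<^sup>2 = 1 - m\<^sup>2 * (jsn m p)\<^sup>2" "(jdn m q)\<^sup>2 = 1 - m\<^sup>2 * (jsn m q)\<^sup>2"
      using sn_cn dn_sq by auto
  have nz: "1 - m\<^sup>2 * (jsn m p)\<^sup>2 * (jsn m q)\<^sup>2 \<noteq> 0" using den_pos[of p q] by simp
  have g: "\<And>a b c d (D::real). a * (b / D) + c * (d / D) = (a * b + c * d) / D"
    by (simp add: add_divide_distrib)
  have "jsn m p * jdn m q * jsn m (p + q) + jcn m p * jcn m (p + q)
    = (jsn m p * jdn m q * (jsn m p * jcn m q * jdn m q + jsn m q * jcn m p * jdn m p)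
       + jcn m p * (jcn m p * jcn m q - jsn m p * jsn m q * jdn m p * jdn m q)) / (1 - m\<^sup>2 * (jsn m p)\<^sup>2 * (jsn m q)\<^sup>2)"
    unfolding add_sn add_cn
    by (rule g)
  also have "\<dots> = jcn m q"
    using nz apply (simp add: divide_eq_eq)
    using r by algebra
  finally show ?thesis by simp
qed


lemma V_jam: "0 \<le> v \<Longrightarrow> v < ellK m \<Longrightarrow> 0 \<le> jam m v \<and> jam m v < pi/2"
  using jam_le_iff[OF m1, of 0 v] jam_less_iff[OF m1, of v "ellK m"] jam_0[OF m1] jam_K[OF m1] by simp

lemma U_jam: "0 \<le> u \<Longrightarrow> u < 4 * ellK m \<Longrightarrow> 0 \<le> jam m u \<and> jam m u < 2*pi"
  using jam_le_iff[OF m1, of 0 u] jam_less_iff[OF m1, of u "4 * ellK m"] jam_0[OF m1] jam_4K[OF m1] by simp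

lemma V_cn: assumes "0 \<le> v" "v < ellK m" shows "jcn m v > 0"
proof -
  have h: "0 \<le> jam m v" "jam m v < pi/2" using V_jam assms by auto
  show ?thesis unfolding jcn_def by (rule cos_gt_zero_pi) (use h pi_gt_zero in linarith)+
qed

lemma V_sn: assumes "0 \<le> v" "v < ellK m" shows "jsn m v \<ge> 0"
proof -
  have h: "0 \<le> jam m v" "jam m v < pi/2" using V_jam assms by auto
  show ?thesis unfolding jsn_def by (rule sin_ge_zero) (use h pi_gt_zero in linarith)+
qed

lemma U_surj: assumes "0 \<le> t" "t < 2*pi"
  shows "0 \<le> ell_F m t \<and> ell_F m t < 4 * ellK m \<and> jsn m (ell_F m t) = sin t \<and> jcn m (ell_F m t) = cos t"
proof -
  have "ell_F m 0 \<le> ell_F m t" using ell_F_le_iff[OF m1] assms by blast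
  moreover have "ell_F m t < ell_F m (2*pi)" using ell_F_less_iff[OF m1] assms by blast
  moreover have "jam m (ell_F m t) = t" by (rule F_jam[OF m1])
  ultimately show ?thesis unfolding jsn_def jcn_def ell_F_2pi[OF m1] ell_F_0 by simp
qed

lemma V_surj: assumes "0 \<le> t" "t < pi/2"
  shows "0 \<le> ell_F m t \<and> ell_F m t < ellK m \<and> jsn m (ell_F m t) = sin t \<and> jcn m (ell_F m t) = cos t"
proof -
  have "ell_F m 0 \<le> ell_F m t" using ell_F_le_iff[OF m1] assms by blast
  moreover have "ell_F m t < ell_F m (pi/2)" using ell_F_less_iff[OF m1] assms by blast
  moreover have "jam m (ell_F m t) = t" by (rule F_jam[OF m1])
  ultimately show ?thesis unfolding jsn_def jcn_def ellK_def ell_F_0 by simp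
qed

lemma V_inj: assumes "0 \<le> v" "v < ellK m" "0 \<le> v'" "v' < ellK m" "jsn m v = jsn m v'"
  shows "v = v'"
proof -
  have h: "0 \<le> jam m v" "jam m v < pi/2" "0 \<le> jam m v'" "jam m v' < pi/2"
    using V_jam[OF assms(1,2)] V_jam[OF assms(3,4)] by auto
  have e: "sin (jam m v) = sin (jam m v')" using assms(5) unfolding jsn_def .
  have "jam m v = jam m v'"
    by (rule sin_inj_pi) (use h e pi_gt_zero in linarith)+
  thus ?thesis using jam_eq_iff[OF m1] by simp
qed

lemma U_inj: assumes "0 \<le> u" "u < 4 * ellK m" "0 \<le> u'" "u' < 4 * ellK m"
  "jsn m u = jsn m u'" "jcn m u = jcn m u'"
  shows "u = u'"
proof -
  obtain n :: int where n: "jam m u = jam m u' + 2 * pi * n"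
    using sin_cos_eq_iff[of "jam m u" "jam m u'"] assms(5,6) unfolding jsn_def jcn_def by blast
  have b: "0 \<le> jam m u \<and> jam m u < 2*pi" "0 \<le> jam m u' \<and> jam m u' < 2*pi"
    using U_jam assms by auto
  have "2 * pi * n < 2 * pi * 1" "2 * pi * (-1) < 2 * pi * n" using n b by linarith+
  moreover have "2 * pi > 0" by simp
  ultimately have "real_of_int n < 1" "-1 < real_of_int n"
    using mult_less_cancel_left_pos[of "2*pi"] by metis+
  hence "n < 1" "-1 < n" by simp_all
  hence "n = 0" by simp
  thus ?thesis using n jam_eq_iff[OF m1] by simp
qed

end

lemma G_strict:
  fixes X Y z1 z2 m :: real
  assumes "m\<^sup>2 < 1" "X \<ge> 0" "Y \<ge> 0" "X + Y > 0" "0 \<le> z1" "z1 < z2" "z2 \<le> 1"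
  shows "X * (1 - z2) / (1 - m\<^sup>2 * z2) + Y * (1 - z2) < X * (1 - z1) / (1 - m\<^sup>2 * z1) + Y * (1 - z1)"
proof -
  have p1: "1 - m\<^sup>2 * z1 > 0" "1 - m\<^sup>2 * z2 > 0"
  proof -
    have "m\<^sup>2 * z1 \<le> m\<^sup>2 * 1" "m\<^sup>2 * z2 \<le> m\<^sup>2 * 1" using assms by (intro mult_left_mono; simp)+
    thus "1 - m\<^sup>2 * z1 > 0" "1 - m\<^sup>2 * z2 > 0" using assms(1) by linarith+
  qed
  have "(1 - z2) * (1 - m\<^sup>2 * z1) < (1 - z1) * (1 - m\<^sup>2 * z2)"
  proof -
    have "(1 - z1) * (1 - m\<^sup>2 * z2) - (1 - z2) * (1 - m\<^sup>2 * z1) = (z2 - z1) * (1 - m\<^sup>2)"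
      by (simp add: algebra_simps)
    moreover have "(z2 - z1) * (1 - m\<^sup>2) > 0" using assms by simp
    ultimately show ?thesis by linarith
  qed
  hence f: "(1 - z2) / (1 - m\<^sup>2 * z2) < (1 - z1) / (1 - m\<^sup>2 * z1)"
    using p1 by (simp add: divide_simps)
  show ?thesis
  proof (cases "X = 0")
    case True
    hence "Y > 0" using assms by simp
    thus ?thesis using True assms by simp
  next
    case False
    hence "X > 0" using assms by simp
    have "X * ((1 - z2) / (1 - m\<^sup>2 * z2)) < X * ((1 - z1) / (1 - m\<^sup>2 * z1))"
      by (rule mult_strict_left_mono[OF f \<open>X > 0\<close>])
    moreover have "Y * (1 - z2) \<le> Y * (1 - z1)" using assms by (intro mult_left_mono) auto
    ultimately show ?thesis by simp
  qed
qed

lemma point_G: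
  fixes a b S C c d s M :: real
  assumes "a \<noteq> 0" "b \<noteq> 0" "c \<noteq> 0" "d \<noteq> 0" "S\<^sup>2 + C\<^sup>2 = 1" "s\<^sup>2 + c\<^sup>2 = 1" "d\<^sup>2 = 1 - M\<^sup>2 * s\<^sup>2"
  shows "((- a * S * d / c)\<^sup>2 / a\<^sup>2) * (1 - s\<^sup>2) / (1 - M\<^sup>2 * s\<^sup>2) + ((b * C / c)\<^sup>2 / b\<^sup>2) * (1 - s\<^sup>2) = 1"
proof -
  have e1: "1 - s\<^sup>2 = c\<^sup>2" using assms by simp
  have e2: "1 - M\<^sup>2 * s\<^sup>2 = d\<^sup>2" using assms by simp
  show ?thesis unfolding e1 e2 using assms by (simp add: field_simps power2_eq_square)
qed


lemma ext_ge:
  fixes a b S C c d s M :: real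
  assumes "a \<noteq> 0" "b \<noteq> 0" "c \<noteq> 0" "S\<^sup>2 + C\<^sup>2 = 1" "s\<^sup>2 + c\<^sup>2 = 1" "d\<^sup>2 = 1 - M\<^sup>2 * s\<^sup>2" "M\<^sup>2 < 1"
  shows "(- a * S * d / c)\<^sup>2 / a\<^sup>2 + (b * C / c)\<^sup>2 / b\<^sup>2 \<ge> 1"
proof -
  have c2: "c\<^sup>2 > 0" using assms by simp
  have "d\<^sup>2 - c\<^sup>2 = s\<^sup>2 * (1 - M\<^sup>2)" using assms by (simp add: algebra_simps)
  moreover have "s\<^sup>2 * (1 - M\<^sup>2) \<ge> 0" using assms by simp
  ultimately have dc: "d\<^sup>2 \<ge> c\<^sup>2" by linarith
  have "S\<^sup>2 * d\<^sup>2 \<ge> S\<^sup>2 * c\<^sup>2" using dc by (simp add: mult_left_mono)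
  moreover have "C\<^sup>2 * (1 - c\<^sup>2) \<ge> 0"
  proof -
    have "1 - c\<^sup>2 = s\<^sup>2" using assms by simp
    thus ?thesis by simp
  qed
  moreover have "c\<^sup>2 = S\<^sup>2 * c\<^sup>2 + C\<^sup>2 * c\<^sup>2"
  proof -
    have "c\<^sup>2 = (S\<^sup>2 + C\<^sup>2) * c\<^sup>2" using assms(4) by simp
    thus ?thesis by (simp add: algebra_simps)
  qed
  ultimately have "S\<^sup>2 * d\<^sup>2 + C\<^sup>2 \<ge> c\<^sup>2" by (simp add: algebra_simps)
  hence "(S\<^sup>2 * d\<^sup>2 + C\<^sup>2) / c\<^sup>2 \<ge> 1" using c2 by simp
  moreover have "(- a * S * d / c)\<^sup>2 / a\<^sup>2 + (b * C / c)\<^sup>2 / b\<^sup>2 = (S\<^sup>2 * d\<^sup>2 + C\<^sup>2) / c\<^sup>2"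
    using assms(1,2,3) by (simp add: field_simps power2_eq_square)
  ultimately show ?thesis by simp
qed

lemma hyp_alg:
  fixes a b S C c d s M :: real
  assumes "a \<noteq> 0" "c \<noteq> 0" "S \<noteq> 0" "C \<noteq> 0" "M \<noteq> 0" "S\<^sup>2 + C\<^sup>2 = 1" "s\<^sup>2 + c\<^sup>2 = 1"
    "d\<^sup>2 = 1 - M\<^sup>2 * s\<^sup>2" "b\<^sup>2 = a\<^sup>2 - a\<^sup>2 * M\<^sup>2"
  shows "(- a * S * d / c)\<^sup>2 / (a\<^sup>2 + (- a\<^sup>2 + a\<^sup>2 * M\<^sup>2 * S\<^sup>2)) + (b * C / c)\<^sup>2 / (b\<^sup>2 + (- a\<^sup>2 + a\<^sup>2 * M\<^sup>2 * S\<^sup>2)) = 1"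
proof -
  have e1: "a\<^sup>2 + (- a\<^sup>2 + a\<^sup>2 * M\<^sup>2 * S\<^sup>2) = a\<^sup>2 * M\<^sup>2 * S\<^sup>2" by simp
  have e2: "b\<^sup>2 + (- a\<^sup>2 + a\<^sup>2 * M\<^sup>2 * S\<^sup>2) = - (a\<^sup>2 * M\<^sup>2 * C\<^sup>2)"
  proof -
    show ?thesis using assms(6,9) by algebra
  qed
  have t1: "(- a * S * d / c)\<^sup>2 / (a\<^sup>2 * M\<^sup>2 * S\<^sup>2) = d\<^sup>2 / (M\<^sup>2 * c\<^sup>2)"
    using assms(1-5) by (simp add: field_simps power2_eq_square)
  have t2: "(b * C / c)\<^sup>2 / - (a\<^sup>2 * M\<^sup>2 * C\<^sup>2) = - (b\<^sup>2 / (a\<^sup>2 * M\<^sup>2 * c\<^sup>2))"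
    using assms(1-5) by (simp add: field_simps power2_eq_square)
  have num: "a\<^sup>2 * d\<^sup>2 - b\<^sup>2 = a\<^sup>2 * M\<^sup>2 * c\<^sup>2"
  proof -
    show ?thesis using assms(7,8,9) by algebra
  qed
  have "d\<^sup>2 / (M\<^sup>2 * c\<^sup>2) - b\<^sup>2 / (a\<^sup>2 * M\<^sup>2 * c\<^sup>2) = (a\<^sup>2 * d\<^sup>2 - b\<^sup>2) / (a\<^sup>2 * M\<^sup>2 * c\<^sup>2)"
    using assms(1-5) by (simp add: field_simps power2_eq_square)
  also have "\<dots> = 1" unfolding num using assms(1-5) by simp
  finally show ?thesis unfolding e1 e2 t1 t2 by simp
qed

locale conf =
  fixes a b :: real
  assumes b0: "0 < b" and ba: "b < a"
begin

abbreviation "M \<equiv> ecc a b"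
abbreviation "K \<equiv> ellK (ecc a b)"

lemma a0: "a > 0" using b0 ba by simp

lemma MM: "M\<^sup>2 = (a\<^sup>2 - b\<^sup>2) / a\<^sup>2"
proof -
  have "b\<^sup>2 < a\<^sup>2" using b0 ba by (simp add: power_strict_mono)
  thus ?thesis unfolding ecc_def by (simp add: power_divide)
qed

lemma aM: "a\<^sup>2 * M\<^sup>2 = a\<^sup>2 - b\<^sup>2"
  unfolding MM using a0 by simp

lemma M1: "M\<^sup>2 < 1"
proof -
  have "0 < b\<^sup>2" using b0 by simp
  moreover have "0 < a\<^sup>2" using a0 by simp
  ultimately show ?thesis unfolding MM by (simp add: divide_simps)
qed

sublocale ellm M by unfold_locales (rule M1)

lemma Y_eq: "Ymap a b u v = (- a * jsn M u * jdn M v / jcn M v, b * jcn M u / jcn M v)"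
  by (simp add: Ymap_def Let_def)

lemma Y_G: assumes "0 \<le> v" "v < K"
  shows "((fst (Ymap a b u v))\<^sup>2 / a\<^sup>2) * (1 - (jsn M v)\<^sup>2) / (1 - M\<^sup>2 * (jsn M v)\<^sup>2)
       + ((snd (Ymap a b u v))\<^sup>2 / b\<^sup>2) * (1 - (jsn M v)\<^sup>2) = 1"
  unfolding Y_eq fst_conv snd_conv
proof (rule point_G)
  show "jdn M v \<noteq> 0" using dn_pos[of v] by simp
  show "jcn M v \<noteq> 0" using V_cn[OF assms] by simp
qed (use a0 b0 sn_cn dn_sq in auto)

lemma sn_sq_lt: assumes "0 \<le> v" "v < K" shows "0 \<le> (jsn M v)\<^sup>2" "(jsn M v)\<^sup>2 < 1"
proof -
  have "(jcn M v)\<^sup>2 > 0" using V_cn[OF assms] by simp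
  moreover have "(jsn M v)\<^sup>2 + (jcn M v)\<^sup>2 = 1" by (rule sn_cn)
  ultimately show "(jsn M v)\<^sup>2 < 1" by linarith
  show "0 \<le> (jsn M v)\<^sup>2" by simp
qed

lemma Y_inj: "inj_on (\<lambda>(u, v). Ymap a b u v) ({0..<4 * K} \<times> {0..<K})"
proof (rule inj_onI, clarify)
  fix u v u' v'
  assume u: "u \<in> {0..<4 * K}" and v: "v \<in> {0..<K}" and u': "u' \<in> {0..<4 * K}" and v': "v' \<in> {0..<K}"
    and eq: "Ymap a b u v = Ymap a b u' v'"
  define X where "X = (fst (Ymap a b u v))\<^sup>2 / a\<^sup>2"
  define Y where "Y = (snd (Ymap a b u v))\<^sup>2 / b\<^sup>2"
  define G where "G = (\<lambda>z. X * (1 - z) / (1 - M\<^sup>2 * z) + Y * (1 - z))"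
  have G1: "G ((jsn M v)\<^sup>2) = 1" using Y_G[of v u] v unfolding G_def X_def Y_def by simp
  have G2: "G ((jsn M v')\<^sup>2) = 1" using Y_G[of v' u'] v' unfolding G_def X_def Y_def eq by simp
  have X0: "X \<ge> 0" "Y \<ge> 0" unfolding X_def Y_def by simp_all
  have XY: "X + Y > 0"
  proof (rule ccontr)
    assume "\<not> X + Y > 0"
    hence "X = 0" "Y = 0" using X0 by linarith+
    thus False using G1 unfolding G_def by simp
  qed
  have z: "0 \<le> (jsn M v)\<^sup>2" "(jsn M v)\<^sup>2 < 1" "0 \<le> (jsn M v')\<^sup>2" "(jsn M v')\<^sup>2 < 1"
    using sn_sq_lt v v' by auto
  have "(jsn M v)\<^sup>2 = (jsn M v')\<^sup>2"
  proof (rule ccontr)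
    assume "(jsn M v)\<^sup>2 \<noteq> (jsn M v')\<^sup>2"
    hence "(jsn M v)\<^sup>2 < (jsn M v')\<^sup>2 \<or> (jsn M v')\<^sup>2 < (jsn M v)\<^sup>2" by linarith
    thus False
    proof
      assume "(jsn M v)\<^sup>2 < (jsn M v')\<^sup>2"
      from G_strict[OF M1 X0 XY z(1) this] z G1 G2 show False unfolding G_def by simp
    next
      assume "(jsn M v')\<^sup>2 < (jsn M v)\<^sup>2"
      from G_strict[OF M1 X0 XY z(3) this] z G1 G2 show False unfolding G_def by simp
    qed
  qed
  hence "jsn M v = jsn M v'"
    using V_sn[of v] V_sn[of v'] v v' by (simp add: power2_eq_iff_nonneg)
  hence vv: "v = v'" using V_inj[of v v'] v v' by simp
  have c: "jcn M v > 0" "jdn M v > 0" using V_cn v dn_pos by auto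
  have "jcn M u = jcn M u'" using eq c b0 unfolding Y_eq vv by (simp add: field_simps)
  moreover have "jsn M u = jsn M u'" using eq c a0 unfolding Y_eq vv by (simp add: field_simps)
  ultimately show "u = u' \<and> v = v'" using U_inj[of u u'] u u' vv by simp
qed


lemma Y_img: "(\<lambda>(u, v). Ymap a b u v) ` ({0..<4 * K} \<times> {0..<K}) = {(x, y). x\<^sup>2 / a\<^sup>2 + y\<^sup>2 / b\<^sup>2 \<ge> 1}"
proof
  show "(\<lambda>(u, v). Ymap a b u v) ` ({0..<4 * K} \<times> {0..<K}) \<subseteq> {(x, y). x\<^sup>2 / a\<^sup>2 + y\<^sup>2 / b\<^sup>2 \<ge> 1}"
  proof (rule subsetI)
    fix p assume "p \<in> (\<lambda>(u, v). Ymap a b u v) ` ({0..<4 * K} \<times> {0..<K})"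
    then obtain u v where u: "u \<in> {0..<4 * K}" and v: "v \<in> {0..<K}" and p: "p = Ymap a b u v" by auto
    have "(- a * jsn M u * jdn M v / jcn M v)\<^sup>2 / a\<^sup>2 + (b * jcn M u / jcn M v)\<^sup>2 / b\<^sup>2 \<ge> 1"
      by (rule ext_ge[OF _ _ _ sn_cn sn_cn dn_sq M1]) (use a0 b0 V_cn[of v] v in auto)
    thus "p \<in> {(x, y). x\<^sup>2 / a\<^sup>2 + y\<^sup>2 / b\<^sup>2 \<ge> 1}" unfolding p Y_eq by simp
  qed
next
  show "{(x, y). x\<^sup>2 / a\<^sup>2 + y\<^sup>2 / b\<^sup>2 \<ge> 1} \<subseteq> (\<lambda>(u, v). Ymap a b u v) ` ({0..<4 * K} \<times> {0..<K})"
  proof clarify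
    fix x y assume h: "x\<^sup>2 / a\<^sup>2 + y\<^sup>2 / b\<^sup>2 \<ge> 1"
    define X where "X = x\<^sup>2 / a\<^sup>2"
    define Y where "Y = y\<^sup>2 / b\<^sup>2"
    define G where "G = (\<lambda>z. X * (1 - z) / (1 - M\<^sup>2 * z) + Y * (1 - z))"
    have den: "1 - M\<^sup>2 * z > 0" if "z \<le> 1" for z
    proof -
      have "M\<^sup>2 * z \<le> M\<^sup>2 * 1" using that by (intro mult_left_mono) auto
      thus ?thesis using M1 by simp
    qed
    have "\<exists>z. 0 \<le> z \<and> z \<le> 1 \<and> G z = 1"
    proof (rule IVT2)
      show "G 1 \<le> 1" unfolding G_def by simp
      show "1 \<le> G 0" unfolding G_def X_def Y_def using h by simp
      show "(0::real) \<le> 1" by simp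
      show "\<forall>z. 0 \<le> z \<and> z \<le> 1 \<longrightarrow> isCont G z"
      proof (intro allI impI)
        fix z :: real assume "0 \<le> z \<and> z \<le> 1"
        hence "1 - M\<^sup>2 * z \<noteq> 0" using den by force
        thus "isCont G z" unfolding G_def by (intro continuous_intros) auto
      qed
    qed
    then obtain z where z: "0 \<le> z" "z \<le> 1" "G z = 1" by blast
    have "z \<noteq> 1" using z unfolding G_def by auto
    hence z1: "z < 1" using z by simp
    define \<phi> where "\<phi> = arcsin (sqrt z)"
    have sq: "0 \<le> sqrt z" "sqrt z < 1" using z z1 by auto
    have ph3: "sin \<phi> = sqrt z" unfolding \<phi>_def by (rule sin_arcsin) (use sq in linarith)+
    have ph: "0 \<le> \<phi>" "\<phi> < pi/2" "sin \<phi> = sqrt z"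
      unfolding \<phi>_def using arcsin_nonneg[of "sqrt z"] arcsin_lt_bounded[of "sqrt z"] ph3[unfolded \<phi>_def] sq by auto
    define v where "v = ell_F M \<phi>"
    have v: "0 \<le> v" "v < K" "jsn M v = sqrt z" "jcn M v = cos \<phi>"
      using V_surj[OF ph(1,2)] ph(3) unfolding v_def by auto
    have cpos: "jcn M v > 0" using V_cn[OF v(1,2)] by simp
    have dpos: "jdn M v > 0" by (rule dn_pos)
    have zz: "(jsn M v)\<^sup>2 = z" using v z by simp
    define S where "S = - x * jcn M v / (a * jdn M v)"
    define C where "C = y * jcn M v / b"
    have "C\<^sup>2 + S\<^sup>2 = G z"
    proof -
      have e1: "1 - z = (jcn M v)\<^sup>2" using sn_cn[of v] zz by simp
      have e2: "1 - M\<^sup>2 * z = (jdn M v)\<^sup>2" using dn_sq[of v] zz by simp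
      show ?thesis unfolding G_def e1 e2 S_def C_def X_def Y_def
        using a0 b0 cpos dpos by (simp add: field_simps power2_eq_square)
    qed
    hence "C\<^sup>2 + S\<^sup>2 = 1" using z by simp
    then obtain t where t: "0 \<le> t" "t < 2*pi" "C = cos t" "S = sin t" by (rule sincos_total_2pi)
    define u where "u = ell_F M t"
    have u: "0 \<le> u" "u < 4 * K" "jsn M u = S" "jcn M u = C"
      using U_surj[OF t(1,2)] t(3,4) unfolding u_def by auto
    have "Ymap a b u v = (x, y)"
      unfolding Y_eq u(3,4) S_def C_def using a0 b0 cpos dpos by (simp add: field_simps)
    thus "(x, y) \<in> (\<lambda>(u, v). Ymap a b u v) ` ({0..<4 * K} \<times> {0..<K})"
      using u v by force
  qed
qed


lemma Y_hyp: assumes u: "u \<in> {0..<4 * K}" and sn: "jsn M u \<noteq> 0" and cn: "jcn M u \<noteq> 0"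
  shows "\<exists>k. - a\<^sup>2 < k \<and> k < - b\<^sup>2 \<and>
           (\<exists>s\<in>{-1, 1::real}. \<forall>v\<in>{0..<K}. Ymap a b u v \<in> confocal a b k \<and> s * fst (Ymap a b u v) > 0)"
proof -
  define k where "k = - a\<^sup>2 + a\<^sup>2 * M\<^sup>2 * (jsn M u)\<^sup>2"
  have Mpos: "M\<^sup>2 > 0" unfolding MM using b0 ba a0 by (simp add: power_strict_mono)
  have s2: "(jsn M u)\<^sup>2 > 0" "(jcn M u)\<^sup>2 > 0" using sn cn by simp_all
  have aMpos: "a\<^sup>2 * M\<^sup>2 > 0" using Mpos a0 by simp
  have b2: "b\<^sup>2 = a\<^sup>2 - a\<^sup>2 * M\<^sup>2" using aM by simp
  have k1: "- a\<^sup>2 < k" unfolding k_def using aMpos s2 by simp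
  have k2: "k < - b\<^sup>2"
  proof -
    have "k + b\<^sup>2 = - (a\<^sup>2 * M\<^sup>2 * (jcn M u)\<^sup>2)"
      unfolding k_def using b2 sn_cn[of u] by algebra
    moreover have "a\<^sup>2 * M\<^sup>2 * (jcn M u)\<^sup>2 > 0" using aMpos s2 by simp
    ultimately show ?thesis by linarith
  qed
  define sg where "sg = (if jsn M u > 0 then -1 else (1::real))"
  have "\<forall>v\<in>{0..<K}. Ymap a b u v \<in> confocal a b k \<and> sg * fst (Ymap a b u v) > 0"
  proof
    fix v assume v: "v \<in> {0..<K}"
    have c: "jcn M v > 0" using V_cn[of v] v by simp
    have d: "jdn M v > 0" by (rule dn_pos)
    have "(- a * jsn M u * jdn M v / jcn M v)\<^sup>2 / (a\<^sup>2 + k) + (b * jcn M u / jcn M v)\<^sup>2 / (b\<^sup>2 + k) = 1"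
      unfolding k_def
      by (rule hyp_alg[OF _ _ sn cn _ sn_cn sn_cn dn_sq b2]) (use a0 c Mpos in auto)
    hence "Ymap a b u v \<in> confocal a b k" unfolding confocal_def Y_eq by simp
    moreover have "sg * fst (Ymap a b u v) > 0"
    proof (cases "jsn M u > 0")
      case True
      hence "a * jsn M u * jdn M v / jcn M v > 0" using a0 c d by simp
      thus ?thesis using True unfolding sg_def Y_eq by simp
    next
      case False
      hence "jsn M u < 0" using sn by simp
      hence "- jsn M u > 0" by simp
      hence "a * (- jsn M u) * jdn M v / jcn M v > 0" using a0 c d by (intro divide_pos_pos mult_pos_pos)
      thus ?thesis using False unfolding sg_def Y_eq by simp
    qed
    ultimately show "Ymap a b u v \<in> confocal a b k \<and> sg * fst (Ymap a b u v) > 0" by blast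
  qed
  moreover have "sg \<in> {-1, 1}" unfolding sg_def by simp
  ultimately show ?thesis using k1 k2 by blast
qed

lemma Y_ell: assumes v: "v \<in> {0..<K}"
  shows "\<exists>k. - b\<^sup>2 < k \<and> (\<lambda>u. Ymap a b u v) ` {0..<4 * K} = confocal a b k"
proof -
  have c: "jcn M v > 0" using V_cn[of v] v by simp
  have d: "jdn M v > 0" by (rule dn_pos)
  define k where "k = b\<^sup>2 * (jsn M v)\<^sup>2 / (jcn M v)\<^sup>2"
  have k0: "k \<ge> 0" unfolding k_def by simp
  have e1: "a\<^sup>2 + k = a\<^sup>2 * (jdn M v)\<^sup>2 / (jcn M v)\<^sup>2"
  proof -
    have "a\<^sup>2 * (jcn M v)\<^sup>2 + b\<^sup>2 * (jsn M v)\<^sup>2 = a\<^sup>2 * (jdn M v)\<^sup>2"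
    proof -
      have "b\<^sup>2 = a\<^sup>2 - a\<^sup>2 * M\<^sup>2" using aM by simp
      thus ?thesis unfolding dn_sq using sn_cn[of v] by algebra
    qed
    thus ?thesis unfolding k_def using c by (simp add: field_simps)
  qed
  have e2: "b\<^sup>2 + k = b\<^sup>2 / (jcn M v)\<^sup>2"
  proof -
    have "b\<^sup>2 * (jcn M v)\<^sup>2 + b\<^sup>2 * (jsn M v)\<^sup>2 = b\<^sup>2"
      using sn_cn[of v] by (simp add: algebra_simps) (metis distrib_left mult.right_neutral)
    thus ?thesis unfolding k_def using c by (simp add: field_simps)
  qed
  have "(\<lambda>u. Ymap a b u v) ` {0..<4 * K} = confocal a b k"
  proof
    show "(\<lambda>u. Ymap a b u v) ` {0..<4 * K} \<subseteq> confocal a b k"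
    proof (rule subsetI)
      fix p assume "p \<in> (\<lambda>u. Ymap a b u v) ` {0..<4 * K}"
      then obtain u where p: "p = Ymap a b u v" by auto
      have "(- a * jsn M u * jdn M v / jcn M v)\<^sup>2 / (a\<^sup>2 + k) + (b * jcn M u / jcn M v)\<^sup>2 / (b\<^sup>2 + k)
          = (jsn M u)\<^sup>2 + (jcn M u)\<^sup>2"
        unfolding e1 e2 using a0 b0 c d by (simp add: field_simps power2_eq_square)
      also have "\<dots> = 1" by (rule sn_cn)
      finally show "p \<in> confocal a b k" unfolding p confocal_def Y_eq by simp
    qed
  next
    show "confocal a b k \<subseteq> (\<lambda>u. Ymap a b u v) ` {0..<4 * K}"
    proof clarify
      fix x y assume "(x, y) \<in> confocal a b k"
      hence h: "x\<^sup>2 / (a\<^sup>2 + k) + y\<^sup>2 / (b\<^sup>2 + k) = 1" unfolding confocal_def by simp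
      define S where "S = - x * jcn M v / (a * jdn M v)"
      define C where "C = y * jcn M v / b"
      have "C\<^sup>2 + S\<^sup>2 = x\<^sup>2 / (a\<^sup>2 + k) + y\<^sup>2 / (b\<^sup>2 + k)"
        unfolding e1 e2 S_def C_def using a0 b0 c d by (simp add: field_simps power2_eq_square)
      hence "C\<^sup>2 + S\<^sup>2 = 1" using h by simp
      then obtain t where t: "0 \<le> t" "t < 2*pi" "C = cos t" "S = sin t" by (rule sincos_total_2pi)
      define u where "u = ell_F M t"
      have u: "0 \<le> u" "u < 4 * K" "jsn M u = S" "jcn M u = C"
        using U_surj[OF t(1,2)] t(3,4) unfolding u_def by auto
      have "Ymap a b u v = (x, y)"
        unfolding Y_eq u(3,4) S_def C_def using a0 b0 c d by (simp add: field_simps)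
      thus "(x, y) \<in> (\<lambda>u. Ymap a b u v) ` {0..<4 * K}" using u by force
    qed
  qed
  moreover have "- b\<^sup>2 < k" using k0 b0 by (smt (verit) zero_less_power2)
  ultimately show ?thesis by blast
qed

lemma Y_tan1: "\<exists>p\<in>ellipse_c a b. \<forall>u\<in>{0..<4 * K}. \<forall>v\<in>{0..<K}. u + v = t \<longrightarrow> Ymap a b u v \<in> tangent_line a b p"
proof
  show "(- a * jsn M t, b * jcn M t) \<in> ellipse_c a b"
    unfolding ellipse_c_def using a0 b0 sn_cn[of t] by (simp add: power_mult_distrib)
  show "\<forall>u\<in>{0..<4 * K}. \<forall>v\<in>{0..<K}. u + v = t \<longrightarrow> Ymap a b u v \<in> tangent_line a b (- a * jsn M t, b * jcn M t)"
  proof (intro ballI impI)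
    fix u v assume u: "u \<in> {0..<4 * K}" and v: "v \<in> {0..<K}" and t: "u + v = t"
    have c: "jcn M v > 0" using V_cn[of v] v by simp
    have id: "jcn M v = jsn M u * jdn M v * jsn M t + jcn M u * jcn M t"
      using tangent_ident[of v u] t by simp
    have "(- a * jsn M u * jdn M v / jcn M v) * (- a * jsn M t) / a\<^sup>2 + (b * jcn M u / jcn M v) * (b * jcn M t) / b\<^sup>2
        = (jsn M u * jdn M v * jsn M t + jcn M u * jcn M t) / jcn M v"
      using a0 b0 c by (simp add: field_simps power2_eq_square)
    also have "\<dots> = 1" using c id by simp
    finally show "Ymap a b u v \<in> tangent_line a b (- a * jsn M t, b * jcn M t)"
      unfolding tangent_line_def Y_eq by simp
  qed
qed

lemma Y_tan2: "\<exists>p\<in>ellipse_c a b. \<forall>u\<in>{0..<4 * K}. \<forall>v\<in>{0..<K}. u - v = t \<longrightarrow> Ymap a b u v \<in> tangent_line a b p"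
proof
  show "(- a * jsn M t, b * jcn M t) \<in> ellipse_c a b"
    unfolding ellipse_c_def using a0 b0 sn_cn[of t] by (simp add: power_mult_distrib)
  show "\<forall>u\<in>{0..<4 * K}. \<forall>v\<in>{0..<K}. u - v = t \<longrightarrow> Ymap a b u v \<in> tangent_line a b (- a * jsn M t, b * jcn M t)"
  proof (intro ballI impI)
    fix u v assume u: "u \<in> {0..<4 * K}" and v: "v \<in> {0..<K}" and t: "u - v = t"
    have c: "jcn M v > 0" using V_cn[of v] v by simp
    have id: "jcn M v = jsn M t * jdn M v * jsn M u + jcn M t * jcn M u"
    proof -
      have tv: "t + v = u" using t by simp
      show ?thesis using tangent_ident[of v t] unfolding tv .
    qed
    have "(- a * jsn M u * jdn M v / jcn M v) * (- a * jsn M t) / a\<^sup>2 + (b * jcn M u / jcn M v) * (b * jcn M t) / b\<^sup>2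
        = (jsn M t * jdn M v * jsn M u + jcn M t * jcn M u) / jcn M v"
      using a0 b0 c by (simp add: field_simps power2_eq_square)
    also have "\<dots> = 1" using c id by simp
    finally show "Ymap a b u v \<in> tangent_line a b (- a * jsn M t, b * jcn M t)"
      unfolding tangent_line_def Y_eq by simp
  qed
qed

end

theorem theorem3:
  fixes a b :: real
  assumes "a > b" and "b > 0"
  shows "let m = ecc a b; K = ellK m; U = {0..<4 * K}; V = {0..<K}; Y = Ymap a b in
     inj_on (\<lambda>(u, v). Y u v) (U \<times> V)
   \<and> (\<lambda>(u, v). Y u v) ` (U \<times> V) = {(x, y). x\<^sup>2 / a\<^sup>2 + y\<^sup>2 / b\<^sup>2 \<ge> 1}
   \<and> (\<forall>u\<in>U. jsn m u \<noteq> 0 \<and> jcn m u \<noteq> 0 \<longrightarrow>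
        (\<exists>k. - a\<^sup>2 < k \<and> k < - b\<^sup>2 \<and>
           (\<exists>s\<in>{-1, 1::real}. \<forall>v\<in>V. Y u v \<in> confocal a b k \<and> s * fst (Y u v) > 0)))
   \<and> (\<forall>v\<in>V. \<exists>k. - b\<^sup>2 < k \<and> (\<lambda>u. Y u v) ` U = confocal a b k)
   \<and> (\<forall>t. \<exists>p\<in>ellipse_c a b. \<forall>u\<in>U. \<forall>v\<in>V. u + v = t \<longrightarrow> Y u v \<in> tangent_line a b p)
   \<and> (\<forall>t. \<exists>p\<in>ellipse_c a b. \<forall>u\<in>U. \<forall>v\<in>V. u - v = t \<longrightarrow> Y u v \<in> tangent_line a b p)"
proof -
  interpret conf a b by unfold_locales (use assms in auto)
  show ?thesis unfolding Let_def
  proof (intro conjI)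
    show "inj_on (\<lambda>(u, v). Ymap a b u v) ({0..<4 * K} \<times> {0..<K})" by (rule Y_inj)
    show "(\<lambda>(u, v). Ymap a b u v) ` ({0..<4 * K} \<times> {0..<K}) = {(x, y). x\<^sup>2 / a\<^sup>2 + y\<^sup>2 / b\<^sup>2 \<ge> 1}"
      by (rule Y_img)
    show "\<forall>u\<in>{0..<4 * K}. jsn M u \<noteq> 0 \<and> jcn M u \<noteq> 0 \<longrightarrow>
        (\<exists>k. - a\<^sup>2 < k \<and> k < - b\<^sup>2 \<and>
           (\<exists>s\<in>{-1, 1::real}. \<forall>v\<in>{0..<K}. Ymap a b u v \<in> confocal a b k \<and> s * fst (Ymap a b u v) > 0))"
      using Y_hyp by blast
    show "\<forall>v\<in>{0..<K}. \<exists>k. - b\<^sup>2 < k \<and> (\<lambda>u. Ymap a b u v) ` {0..<4 * K} = confocal a b k"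
      using Y_ell by blast
    show "\<forall>t. \<exists>p\<in>ellipse_c a b. \<forall>u\<in>{0..<4 * K}. \<forall>v\<in>{0..<K}. u + v = t \<longrightarrow> Ymap a b u v \<in> tangent_line a b p"
      using Y_tan1 by blast
    show "\<forall>t. \<exists>p\<in>ellipse_c a b. \<forall>u\<in>{0..<4 * K}. \<forall>v\<in>{0..<K}. u - v = t \<longrightarrow> Ymap a b u v \<in> tangent_line a b p"
      using Y_tan2 by blast
  qed
qed

end
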